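(* $V_{\mathcal J}=M_r$; that is, the subspace of $M_r$ spanned by all vectors $L_r^{i_1j_1}(m_1)\cdots L_r^{i_pj_p}(m_p)\mathbf 1$ ($p\ge 0$, $1\le i_q,j_q\le d$, $m_q\in\mathbb Z$) is all of $M_r$.
   Context: Fix an integer $d\ge 2$ and $r\in\mathbb{C}$. Let $\hat{\mathfrak h}$ be the complex Lie algebra with basis $\{v^i(m)\mid 1\le i\le d,\ m\in\mathbb{Z}\}\cup\{\mathbf c\}$ and bracket $[v^i(m),v^j(n)]=\delta_{m+n,0}\delta_{i,j}\,m\,\mathbf c$, $[\mathbf c,\hat{\mathfrak h}]=0$. In $A=U(\hat{\mathfrak h})/\langle \mathbf c-1\rangle$ let $v^{ij}(m,n)$ be the image of $v^i(m)v^j(n)$; then $v^{ij}(m,n)=v^{ji}(n,m)$ unless $i=j$ and $m=-n$, and $v^{ii}(m,-m)=v^{ii}(-m,m)+m$. Let $\mathcal B=\{v^{ii}(m,n)\mid 1\le i\le d,\ m\le n\}\cup\{v^{ij}(m,n)\mid 1\le i<j\le d,\ m,n\in\mathbb Z\}$; then $\mathcal B\cup\{1\}$ is linearly independent, $\mathcal L:=\mathrm{span}_{\mathbb C}\mathcal B\oplus\mathbb C\subset A$ contains every $v^{ij}(m,n)$ and is closed under $[x,y]=xy-yx$. With $\pi_1,\pi_2$ the projections of $\mathcal L$ onto $\mathrm{span}\,\mathcal B$ and onto $\mathbb C$, $[x,y]_r=\pi_1([x,y])+r\pi_2([x,y])$ is a Lie bracket on $\mathcal L$; call this Lie algebra $\mathcal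 L_r$. Let $\mathcal B_+=\{v^{ij}(m,n)\in\mathcal B\mid m\ge 0\text{ or }n\ge 0\}$, $\mathcal B_-=\{v^{ij}(m,n)\in\mathcal B\mid m,n<0\}$, $\mathcal L_r^+=\mathrm{span}\,\mathcal B_+\oplus\mathbb C$, and $M_r=U(\mathcal L_r)\otimes_{U(\mathcal L_r^+)}\mathbb C\mathbf 1$, where $\mathcal B_+$ acts by $0$ on $\mathbf 1$ and $s\in\mathbb C\subset\mathcal L_r$ acts by the scalar $s$. Define operators on $M_r$: $L_r^{ij}(m)=\frac12\sum_{h\in\mathbb Z}v^{ij}(m-h,h)$ if $i\ne j$ or $m\ne0$, and $L_r^{ii}(0)=\frac12 v^{ii}(0,0)+\sum_{h>0}v^{ii}(-h,h)$ (on each vector only finitely many terms are nonzero). $V_{\mathcal J}$ denotes the span described in the claim. *)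

theory Defs
  imports Complex_Main
begin

text \<open>
  Basis of L_r: generators V i j m n (standing for v^{ij}(m,n), valid iff
  1 <= i,j <= d and (i < j, or i = j and m <= n)) and One (the constant 1).
  U(L_r) is modelled by the free vector space on words (lists) of valid
  generators modulo the two-sided ideal generated by x y - y x - [x,y]_r;
  M_r = U(L_r) tensor_{U(L_r^+)} C 1 is that space modulo additionally
  the left ideal generated by B_+ and by (One - 1).  So a vector of M_r is
  represented by a finitely supported function  gen list => complex,
  and the kernel of the quotient map is the span of Rgens below.
\<close>

datatype gen = V nat nat int int | One

fun valid_gen :: "nat \<Rightarrow> gen \<Rightarrow> bool" where
  "valid_gen d (V i j m n) =
     (1 \<le> i \<and> i \<le> d \<and> 1 \<le> j \<and> j \<le> d \<and> (i < j \<or> (i = j \<and> m \<le> n)))"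
| "valid_gen d One = True"

definition valid_word :: "nat \<Rightarrow> gen list \<Rightarrow> bool" where
  "valid_word d w = list_all (valid_gen d) w"

fun in_Bplus :: "gen \<Rightarrow> bool" where
  "in_Bplus (V i j m n) = (0 \<le> m \<or> 0 \<le> n)"
| "in_Bplus One = False"

definition delta :: "'a \<Rightarrow> 'a \<Rightarrow> complex" where
  "delta a = (\<lambda>b. if b = a then 1 else 0)"

text \<open>The element v^{ij}(m,n) of L (for 1 <= i,j <= d), expressed in the basis B \<union> {1}.\<close>
definition vv :: "nat \<Rightarrow> nat \<Rightarrow> int \<Rightarrow> int \<Rightarrow> gen \<Rightarrow> complex" where
  "vv i j m n =
    (if i < j then delta (V i j m n)
     else if j < i then delta (V j i n m)
     else if m \<le> n then delta (V i i m n)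
     else if m = - n then (\<lambda>g. delta (V i i n m) g + (if g = One then of_int m else 0))
     else delta (V i i n m))"

definition kd :: "nat \<Rightarrow> nat \<Rightarrow> int \<Rightarrow> int \<Rightarrow> complex" where
  "kd i k s c = (if i = k \<and> s = 0 then of_int c else 0)"

text \<open>Commutator in A of basis elements:
  [v^i(a)v^j(b), v^k(c)v^l(e)] = [v^j(b),v^k(c)] v^{il}(a,e) + [v^j(b),v^l(e)] v^{ik}(a,c)
     + [v^i(a),v^k(c)] v^{lj}(e,b) + [v^i(a),v^l(e)] v^{kj}(c,b).\<close>
fun brkA :: "gen \<Rightarrow> gen \<Rightarrow> gen \<Rightarrow> complex" where
  "brkA (V i j a b) (V k l c e) =
     (\<lambda>g. kd j k (b + c) b * vv i l a e g + kd j l (b + e) b * vv i k a c g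
        + kd i k (a + c) a * vv l j e b g + kd i l (a + e) a * vv k j c b g)"
| "brkA _ _ = (\<lambda>g. 0)"

text \<open>The bracket [x,y]_r = pi_1([x,y]) + r pi_2([x,y]).\<close>
definition brk :: "complex \<Rightarrow> gen \<Rightarrow> gen \<Rightarrow> gen \<Rightarrow> complex" where
  "brk r x y = (\<lambda>g. if g = One then r * brkA x y One else brkA x y g)"

definition wd :: "gen list \<Rightarrow> gen list \<Rightarrow> complex" where
  "wd w = (\<lambda>t. if t = w then 1 else 0)"

text \<open>ins u z w: the vector u \<cdot> z \<cdot> w, for z an element of L (given by coordinates).\<close>
definition ins :: "gen list \<Rightarrow> (gen \<Rightarrow> complex) \<Rightarrow> gen list \<Rightarrow> gen list \<Rightarrow> complex" where
  "ins u z w = (\<lambda>t. if length t = length u + length w + 1 \<and> take (length u) t = u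
                        \<and> drop (length u + 1) t = w then z (t ! length u) else 0)"

definition act :: "(gen \<Rightarrow> complex) \<Rightarrow> (gen list \<Rightarrow> complex) \<Rightarrow> gen list \<Rightarrow> complex" where
  "act z f = (\<lambda>t. case t of [] \<Rightarrow> 0 | g # t' \<Rightarrow> z g * f t')"

definition cspan :: "(gen list \<Rightarrow> complex) set \<Rightarrow> (gen list \<Rightarrow> complex) set" where
  "cspan S = {f. \<exists>A c. finite A \<and> A \<subseteq> S \<and> f = (\<lambda>t. \<Sum>a\<in>A. c a * a t)}"

definition Rgens :: "nat \<Rightarrow> complex \<Rightarrow> (gen list \<Rightarrow> complex) set" where
  "Rgens d r =
     {(\<lambda>t. wd (u @ [x, y] @ w) t - wd (u @ [y, x] @ w) t - ins u (brk r x y) w t) | u x y w.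
        valid_word d u \<and> valid_gen d x \<and> valid_gen d y \<and> valid_word d w}
   \<union> {wd (u @ [b]) | u b. valid_word d u \<and> valid_gen d b \<and> in_Bplus b}
   \<union> {(\<lambda>t. wd (u @ [One]) t - wd u t) | u. valid_word d u}"

definition Ker :: "nat \<Rightarrow> complex \<Rightarrow> (gen list \<Rightarrow> complex) set" where
  "Ker d r = cspan (Rgens d r)"

text \<open>The operator L_r^{ij}(m) on (representatives of) vectors of M_r; the sum runs over
  the terms that are nonzero in M_r (finitely many on each vector).\<close>
definition Lop :: "nat \<Rightarrow> complex \<Rightarrow> nat \<Rightarrow> nat \<Rightarrow> int \<Rightarrow> (gen list \<Rightarrow> complex) \<Rightarrow> gen list \<Rightarrow> complex" where
  "Lop d r i j m f =
    (if i \<noteq> j \<or> m \<noteq> 0 then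
       (\<lambda>t. (1/2) * (\<Sum>h\<in>{h. act (vv i j (m - h) h) f \<notin> Ker d r}. act (vv i j (m - h) h) f t))
     else
       (\<lambda>t. (1/2) * act (vv i i 0 0) f t
            + (\<Sum>h\<in>{h. 0 < h \<and> act (vv i i (- h) h) f \<notin> Ker d r}. act (vv i i (- h) h) f t)))"

definition Lvecs :: "nat \<Rightarrow> complex \<Rightarrow> (gen list \<Rightarrow> complex) set" where
  "Lvecs d r = {foldr (\<lambda>(i, j, m) f. Lop d r i j m f) qs (wd []) | qs.
                  \<forall>(i, j, m) \<in> set qs. 1 \<le> i \<and> i \<le> d \<and> 1 \<le> j \<and> j \<le> d}"

end

theory Submission
  imports Defs "HOL-Library.Function_Algebras"
begin

definition sc :: "complex \<Rightarrow> ('a \<Rightarrow> complex) \<Rightarrow> 'a \<Rightarrow> complex" where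
  "sc c f = (\<lambda>x. c * f x)"

interpretation fm: module "sc :: complex \<Rightarrow> ('a \<Rightarrow> complex) \<Rightarrow> 'a \<Rightarrow> complex"
  by unfold_locales (auto simp: sc_def fun_eq_iff algebra_simps)

lemma sum_fun_apply: "(\<Sum>a\<in>A. F a) t = (\<Sum>a\<in>A. F a t)"
  by (induction A rule: infinite_finite_induct) auto

lemma cspan_eq: "cspan S = fm.span S"
  unfolding cspan_def fm.span_explicit
  by (auto simp: sc_def sum_fun_apply fun_eq_iff)

definition pre :: "gen \<Rightarrow> (gen list \<Rightarrow> complex) \<Rightarrow> gen list \<Rightarrow> complex" where
  "pre g f = act (delta g) f"

lemma pre_wd[simp]: "pre g (wd w) = wd (g # w)"
  by (auto simp: pre_def act_def wd_def delta_def fun_eq_iff split: list.splits)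

lemma pre_ins[simp]: "pre g (ins u z w) = ins (g # u) z w"
  by (auto simp: pre_def act_def ins_def delta_def fun_eq_iff split: list.splits)

lemma pre_add[simp]: "pre g (f + h) = pre g f + pre g h"
  by (auto simp: pre_def act_def fun_eq_iff algebra_simps split: list.splits)

lemma pre_diff: "pre g (\<lambda>t. f t - h t) = (\<lambda>t. pre g f t - pre g h t)"
  by (auto simp: pre_def act_def fun_eq_iff algebra_simps split: list.splits)

lemma pre_sc[simp]: "pre g (sc c f) = sc c (pre g f)"
  by (auto simp: pre_def act_def sc_def fun_eq_iff algebra_simps split: list.splits)

lemma pre_zero[simp]: "pre g 0 = 0"
  by (auto simp: pre_def act_def fun_eq_iff split: list.splits)

lemma act_wd: "act z (wd X) = ins [] z X"
  by (auto simp: act_def ins_def wd_def fun_eq_iff split: list.splits)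

lemma ins_delta[simp]: "ins u (delta g) w = wd (u @ g # w)"
  apply (auto simp: ins_def wd_def delta_def fun_eq_iff)
  by (metis append_take_drop_id Cons_nth_drop_Suc add_Suc_right length_append_singleton
      less_add_Suc1 length_append list.size(4) add.commute)

lemma pre_diff3: "pre g (\<lambda>t. f t - h t - k t) = (\<lambda>t. pre g f t - pre g h t - pre g k t)"
  by (auto simp: pre_def act_def fun_eq_iff algebra_simps split: list.splits)

lemma valid_word_Cons[simp]: "valid_word d (g # w) = (valid_gen d g \<and> valid_word d w)"
  by (simp add: valid_word_def)
lemma valid_word_Nil[simp]: "valid_word d []"
  by (simp add: valid_word_def)
lemma valid_word_append[simp]: "valid_word d (u @ w) = (valid_word d u \<and> valid_word d w)"
  by (simp add: valid_word_def)

lemma pre_Rgens: "valid_gen d g \<Longrightarrow> x \<in> Rgens d r \<Longrightarrow> pre g x \<in> Rgens d r"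
  unfolding Rgens_def
  apply (elim UnE CollectE exE conjE)
  subgoal for u x y w
    apply (rule UnI1, rule UnI1)
    apply (simp only: pre_diff3 pre_wd pre_ins)
    apply (rule CollectI)
    by (rule exI[of _ "g # u"], rule exI[of _ x], rule exI[of _ y], rule exI[of _ w]) simp
  subgoal for u b
    apply (rule UnI1, rule UnI2)
    apply (simp only: pre_wd)
    apply (rule CollectI)
    by (rule exI[of _ "g # u"], rule exI[of _ b]) simp
  subgoal for u
    apply (rule UnI2)
    apply (simp only: pre_diff pre_wd)
    apply (rule CollectI)
    by (rule exI[of _ "g # u"]) simp
  done

lemma pre_Ker: assumes g: "valid_gen d g" and f: "f \<in> Ker d r" shows "pre g f \<in> Ker d r"
proof -
  have "f \<in> fm.span (Rgens d r)" using f unfolding Ker_def cspan_eq .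
  then have "pre g f \<in> fm.span (Rgens d r)"
  proof (induction rule: fm.span_induct_alt)
    case base then show ?case using fm.span_zero by (metis pre_zero)
  next
    case (step c x y) then show ?case
      unfolding pre_add pre_sc by (rule fm.span_add[OF fm.span_scale[OF fm.span_base[OF pre_Rgens[OF g]]]])
  qed
  then show ?thesis unfolding Ker_def cspan_eq .
qed

definition G :: "nat \<Rightarrow> nat \<Rightarrow> int \<Rightarrow> int \<Rightarrow> gen" where
  "G i j p q = (if i < j then V i j p q else if j < i then V j i q p else if p \<le> q then V i i p q else V i i q p)"

lemma vv_eq: "vv i j p q = (\<lambda>g. delta (G i j p q) g + (if i = j \<and> q < p \<and> p = - q then of_int p else 0) * delta One g)"
  by (auto simp: vv_def G_def delta_def fun_eq_iff)

lemma vv_G: "\<not> (i = j \<and> q < p \<and> p = - q) \<Longrightarrow> vv i j p q = delta (G i j p q)"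
  by (auto simp: vv_eq fun_eq_iff)

lemma valid_G: "1 \<le> i \<Longrightarrow> i \<le> d \<Longrightarrow> 1 \<le> j \<Longrightarrow> j \<le> d \<Longrightarrow> valid_gen d (G i j p q)"
  by (auto simp: G_def)

fun negm :: "gen \<Rightarrow> bool" where
  "negm (V i j a b) = (a < 0 \<and> b < 0)"
| "negm One = False"

fun semi :: "gen \<Rightarrow> bool" where
  "semi (V i j a b) = ((0 \<le> a \<or> 0 \<le> b) \<and> a + b \<le> 0)"
| "semi One = False"

lemma negm_G: "p < 0 \<Longrightarrow> q < 0 \<Longrightarrow> negm (G i j p q)"
  by (auto simp: G_def)

lemma lam_add: "(\<lambda>x. f x + g x) = f + g" by (simp add: fun_eq_iff)
lemma lam_diff: "(\<lambda>x. f x - g x) = f - g" by (simp add: fun_eq_iff)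

lemma brkA_zero: "a + c \<noteq> 0 \<Longrightarrow> a + e \<noteq> 0 \<Longrightarrow> b + c \<noteq> 0 \<Longrightarrow> b + e \<noteq> 0 \<Longrightarrow>
   brkA (V i j a b) (V k l c e) = (\<lambda>_. 0)"
  by (simp add: kd_def fun_eq_iff)

lemma brk_of_zero: "brkA x y = (\<lambda>_. 0) \<Longrightarrow> brk r x y = (\<lambda>_. 0)"
  by (simp add: brk_def fun_eq_iff)

lemma brk_negm: "negm x \<Longrightarrow> negm y \<Longrightarrow> brk r x y = (\<lambda>_. 0)"
  by (cases x; cases y) (auto intro!: brk_of_zero brkA_zero)

lemma brk_split: "brk r x y = brkA x y + sc ((r - 1) * brkA x y One) (delta One)"
  by (auto simp: brk_def sc_def delta_def fun_eq_iff algebra_simps)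

lemma ins_add: "ins u (z1 + z2) w = ins u z1 w + ins u z2 w"
  by (auto simp: ins_def fun_eq_iff)
lemma ins_sc: "ins u (sc c z) w = sc c (ins u z w)"
  by (auto simp: ins_def sc_def fun_eq_iff)
lemma ins_zero: "ins u 0 w = 0"
  by (auto simp: ins_def fun_eq_iff)
lemma act_zadd: "act (z1 + z2) f = act z1 f + act z2 f"
  by (auto simp: act_def fun_eq_iff algebra_simps split: list.splits)
lemma act_zsc: "act (sc c z) f = sc c (act z f)"
  by (auto simp: act_def sc_def fun_eq_iff algebra_simps split: list.splits)
lemma act_zzero: "act 0 f = 0"
  by (auto simp: act_def fun_eq_iff split: list.splits)
lemma act_fadd: "act z (f1 + f2) = act z f1 + act z f2"
  by (auto simp: act_def fun_eq_iff algebra_simps split: list.splits)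
lemma act_fsc: "act z (sc c f) = sc c (act z f)"
  by (auto simp: act_def sc_def fun_eq_iff algebra_simps split: list.splits)
lemma act_fzero: "act z 0 = 0"
  by (auto simp: act_def fun_eq_iff split: list.splits)
lemma act_fdiff: "act z (f1 - f2) = act z f1 - act z f2"
  by (auto simp: act_def fun_eq_iff algebra_simps split: list.splits)
lemma pre_minus: "pre g (f1 - f2) = pre g f1 - pre g f2"
  by (simp add: pre_def act_fdiff)

lemma ins_span:
  assumes "z \<in> fm.span {delta g | g. P g}"
  shows "ins u z w \<in> fm.span {wd (u @ g # w) | g. P g}"
  using assms
proof (induction rule: fm.span_induct_alt)
  case base then show ?case by (metis ins_zero fm.span_zero)
next
  case (step c x y)
  then obtain g where "x = delta g" "P g" by auto
  then show ?case using step unfolding ins_add ins_sc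
    by (intro fm.span_add[OF fm.span_scale[OF fm.span_base]]) auto
qed

lemma act_span:
  assumes "z \<in> fm.span {delta g | g. P g}" "\<And>g. P g \<Longrightarrow> pre g f \<in> S" "fm.subspace S"
  shows "act z f \<in> S"
  using assms(1)
proof (induction rule: fm.span_induct_alt)
  case base then show ?case by (metis act_zzero fm.subspace_0 assms(3))
next
  case (step c x y)
  then obtain g where "x = delta g" "P g" by auto
  then show ?case using step assms(2,3) unfolding act_zadd act_zsc pre_def[symmetric]
    by (intro fm.subspace_add fm.subspace_scale) (auto simp: pre_def)
qed

lemma lam_add4: "(\<lambda>g. A g + B g + C g + D g) = (\<lambda>g. A g) + (\<lambda>g. B g) + (\<lambda>g. C g) + (\<lambda>g. D g)"
  by (simp add: fun_eq_iff)

lemma zero_in_span: "(\<lambda>_. 0) \<in> fm.span S"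
  using fm.span_zero[of S] by (simp add: zero_fun_def)

lemma term_span_valid:
  assumes "1 \<le> i" "i \<le> d" "1 \<le> l" "l \<le> d"
  shows "(\<lambda>g. \<kappa> * vv i l a e g) \<in> fm.span {delta g|g. valid_gen d g}"
proof -
  have "(\<lambda>g. \<kappa> * vv i l a e g) = sc \<kappa> (delta (G i l a e)) + sc (\<kappa> * (if i = l \<and> e < a \<and> a = - e then of_int a else 0)) (delta One)"
    by (simp add: vv_eq sc_def fun_eq_iff algebra_simps)
  also have "\<dots> \<in> fm.span {delta g|g. valid_gen d g}"
    using assms by (intro fm.span_add fm.span_scale fm.span_base) (auto intro!: valid_G)
  finally show ?thesis .
qed

lemma term_span_negm:
  assumes "1 \<le> i" "i \<le> d" "1 \<le> l" "l \<le> d" "\<kappa> \<noteq> 0 \<Longrightarrow> a < 0 \<and> e < 0"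
  shows "(\<lambda>g. \<kappa> * vv i l a e g) \<in> fm.span {delta g|g. valid_gen d g \<and> negm g}"
proof (cases "\<kappa> = 0")
  case True then show ?thesis by (simp add: zero_in_span)
next
  case False
  then have "a < 0" "e < 0" using assms(5) by auto
  then have "(\<lambda>g. \<kappa> * vv i l a e g) = sc \<kappa> (delta (G i l a e))"
    by (simp add: vv_G sc_def)
  also have "\<dots> \<in> fm.span {delta g|g. valid_gen d g \<and> negm g}"
    using assms \<open>a < 0\<close> \<open>e < 0\<close>
    by (intro fm.span_scale fm.span_base) (auto intro!: valid_G negm_G)
  finally show ?thesis .
qed

lemma brkA_One1: "brkA One y = (\<lambda>_. 0)" by (cases y) auto
lemma brkA_One2: "brkA x One = (\<lambda>_. 0)" by (cases x) auto

lemma brkA_span_V: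
  assumes "valid_gen d (V i j a b)" "valid_gen d (V k l c e)"
  shows "brkA (V i j a b) (V k l c e) \<in> fm.span {delta g|g. valid_gen d g}"
  unfolding brkA.simps
  apply (subst lam_add4)
  apply (rule fm.span_add)+
  by (rule term_span_valid; use assms in simp)+

lemma brkA_span:
  assumes "valid_gen d x" "valid_gen d y"
  shows "brkA x y \<in> fm.span {delta g|g. valid_gen d g}"
  using assms by (cases x; cases y) (simp_all only: brkA_span_V brkA_One1 brkA_One2 zero_in_span)

lemma brk_span:
  assumes "valid_gen d x" "valid_gen d y"
  shows "brk r x y \<in> fm.span {delta g|g. valid_gen d g}"
  unfolding brk_split
  by (rule fm.span_add[OF brkA_span[OF assms] fm.span_scale[OF fm.span_base]]) auto

lemma kd_ne: "kd i k s c \<noteq> 0 \<Longrightarrow> i = k \<and> s = 0 \<and> c \<noteq> 0"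
  by (auto simp: kd_def split: if_splits)

lemma brkA_semi_span_V:
  assumes "valid_gen d (V i j a b)" "semi (V i j a b)" "valid_gen d (V k l c e)" "negm (V k l c e)"
  shows "brkA (V i j a b) (V k l c e) \<in> fm.span {delta g|g. valid_gen d g \<and> negm g}"
  unfolding brkA.simps
  apply (subst lam_add4)
  apply (rule fm.span_add)+
  by (rule term_span_negm; insert assms; auto dest!: kd_ne)+

lemma brkA_semi_span:
  assumes "valid_gen d x" "semi x" "valid_gen d y" "negm y"
  shows "brkA x y \<in> fm.span {delta g|g. valid_gen d g \<and> negm g}"
  using assms brkA_semi_span_V[of d] by (cases x; cases y) (auto simp del: brkA.simps)

lemma span_at_One:
  assumes "f \<in> fm.span {delta g|g. P g}" "\<not> P One"
  shows "f One = 0"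
  using assms(1)
proof (induction rule: fm.span_induct_alt)
  case base then show ?case by simp
next
  case (step c x y)
  then obtain g where "x = delta g" "P g" by auto
  then have "g \<noteq> One" using assms(2) by auto
  then show ?case using step \<open>x = delta g\<close> by (simp add: sc_def delta_def)
qed

lemma brk_semi_span:
  assumes "valid_gen d x" "semi x" "valid_gen d y" "negm y"
  shows "brk r x y \<in> fm.span {delta g|g. valid_gen d g \<and> negm g}"
proof -
  have 1: "brkA x y \<in> fm.span {delta g|g. valid_gen d g \<and> negm g}" by (rule brkA_semi_span[OF assms])
  have "brkA x y One = 0" by (rule span_at_One[OF 1]) simp
  then have "brk r x y = brkA x y" by (simp add: brk_def fun_eq_iff)
  then show ?thesis using 1 by simp
qed

lemma span_map:
  assumes "f \<in> fm.span S" "\<And>c x y. L (sc c x + y) = sc c (L x) + L y" "L 0 = 0"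
    "\<And>x. x \<in> S \<Longrightarrow> L x \<in> T" "fm.subspace T"
  shows "L f \<in> T"
  using assms(1)
proof (induction rule: fm.span_induct_alt)
  case base then show ?case using assms(3,5) fm.subspace_0 by metis
next
  case (step c x y) then show ?case using assms(2,4,5) by (metis fm.subspace_add fm.subspace_scale)
qed

lemma pre_lin: "pre g (sc c x + y) = sc c (pre g x) + pre g y" by simp

lemma Ker_span: "Ker d r = fm.span (Rgens d r)" unfolding Ker_def cspan_eq ..
lemma Ker_subspace: "fm.subspace (Ker d r)" unfolding Ker_span by simp

lemma rel_comm:
  assumes "valid_word d u" "valid_word d w" "valid_gen d g" "valid_gen d x"
  shows "wd (u @ g # x # w) - wd (u @ x # g # w) - ins u (brk r g x) w \<in> Ker d r"
proof -
  have "(\<lambda>t. wd (u @ [g, x] @ w) t - wd (u @ [x, g] @ w) t - ins u (brk r g x) w t) \<in> Rgens d r"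
    unfolding Rgens_def using assms by blast
  then show ?thesis unfolding Ker_span by (simp add: fm.span_base fun_diff_def)
qed

lemma rel_Bplus:
  assumes "valid_word d u" "valid_gen d g" "in_Bplus g"
  shows "wd (u @ [g]) \<in> Ker d r"
proof -
  have "wd (u @ [g]) \<in> Rgens d r" unfolding Rgens_def using assms by blast
  then show ?thesis unfolding Ker_span by (simp add: fm.span_base)
qed

lemma rel_One:
  assumes "valid_word d u"
  shows "wd (u @ [One]) - wd u \<in> Ker d r"
proof -
  have "(\<lambda>t. wd (u @ [One]) t - wd u t) \<in> Rgens d r" unfolding Rgens_def using assms by blast
  then show ?thesis unfolding Ker_span by (simp add: fm.span_base fun_diff_def)
qed

definition NB :: "nat \<Rightarrow> (gen list \<Rightarrow> complex) set" where
  "NB d = {wd X | X. valid_word d X \<and> list_all negm X}"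

definition NK :: "nat \<Rightarrow> complex \<Rightarrow> (gen list \<Rightarrow> complex) set" where
  "NK d r = fm.span (NB d \<union> Ker d r)"

lemma Ker_NK: "f \<in> Ker d r \<Longrightarrow> f \<in> NK d r"
  unfolding NK_def by (simp add: fm.span_base)
lemma NB_NK: "valid_word d X \<Longrightarrow> list_all negm X \<Longrightarrow> wd X \<in> NK d r"
  unfolding NK_def NB_def by (rule fm.span_base) blast
lemma NK_subspace: "fm.subspace (NK d r)" unfolding NK_def by simp

lemma pre_NK:
  assumes "valid_gen d x" "negm x" "f \<in> NK d r"
  shows "pre x f \<in> NK d r"
  using assms(3) unfolding NK_def[of d r]
  apply (rule span_map[where L="pre x"])
    apply simp apply simp
  subgoal for y
    apply (rule fm.span_base)
    using assms(1,2) by (auto simp: NB_def pre_Ker)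
  by simp

lemma notBplus_negm: "\<not> in_Bplus g \<Longrightarrow> g \<noteq> One \<Longrightarrow> negm g"
  by (cases g) auto

lemma COMM_NK:
  assumes "valid_word d X" "list_all negm X" "valid_gen d g"
  shows "wd (g # X) \<in> NK d r"
  using assms
proof (induction X arbitrary: g)
  case Nil
  show ?case
  proof (cases "g = One")
    case True
    have "wd [One] = (wd ([] @ [One]) - wd []) + wd []" by simp
    also have "\<dots> \<in> NK d r"
      by (rule fm.subspace_add[OF NK_subspace Ker_NK[OF rel_One] NB_NK]) auto
    finally show ?thesis using True by simp
  next
    case False
    show ?thesis
    proof (cases "in_Bplus g")
      case True
      then show ?thesis using rel_Bplus[of d "[]" g r] Nil Ker_NK by simp
    next
      case F2: False
      then show ?thesis using notBplus_negm[OF F2 False] Nil by (intro NB_NK) auto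
    qed
  qed
next
  case (Cons x X)
  have vx: "valid_gen d x" "negm x" "valid_word d X" "list_all negm X" using Cons.prems by auto
  have e: "wd (g # x # X) = (wd ([] @ g # x # X) - wd ([] @ x # g # X) - ins [] (brk r g x) X)
      + pre x (wd (g # X)) + ins [] (brk r g x) X" by simp
  have 1: "wd ([] @ g # x # X) - wd ([] @ x # g # X) - ins [] (brk r g x) X \<in> NK d r"
    by (rule Ker_NK, rule rel_comm) (use Cons.prems in auto)
  have 2: "pre x (wd (g # X)) \<in> NK d r"
    by (rule pre_NK[OF vx(1,2) Cons.IH[OF vx(3,4) Cons.prems(3)]])
  have 3: "ins [] (brk r g x) X \<in> fm.span {wd ([] @ g' # X) | g'. valid_gen d g'}"
    by (rule ins_span, rule brk_span) (use Cons.prems in auto)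
  have 4: "fm.span {wd ([] @ g' # X) | g'. valid_gen d g'} \<subseteq> NK d r"
    by (rule fm.span_minimal[OF _ NK_subspace]) (use Cons.IH[OF vx(3,4)] in auto)
  show ?case unfolding e using 1 2 3 4 by (intro fm.subspace_add[OF NK_subspace]) auto
qed

lemma pre_NK_any:
  assumes "valid_gen d g" "f \<in> NK d r"
  shows "pre g f \<in> NK d r"
  using assms(2) unfolding NK_def[of d r]
  apply (rule span_map[where L="pre g"])
    apply simp apply simp
  subgoal for y
    using assms(1) COMM_NK[of d _ g r] by (auto simp: NB_def pre_Ker fm.span_base NK_def)
  by simp

lemma NF: "valid_word d w \<Longrightarrow> wd w \<in> NK d r"
proof (induction w)
  case Nil then show ?case by (intro NB_NK) auto
next
  case (Cons g w)
  then show ?case using pre_NK_any[of d g "wd w" r] by simp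
qed

lemma act_vv: "act (vv i j p q) f = pre (G i j p q) f + sc (if i = j \<and> q < p \<and> p = - q then of_int p else 0) (pre One f)"
  by (auto simp: vv_eq pre_def act_def sc_def delta_def fun_eq_iff algebra_simps split: list.splits)

lemma act_vv_G: "\<not> (i = j \<and> q < p \<and> p = - q) \<Longrightarrow> act (vv i j p q) f = pre (G i j p q) f"
  by (simp add: vv_G pre_def)

definition fin :: "nat \<Rightarrow> (gen list \<Rightarrow> complex) set" where
  "fin d = fm.span {wd w | w. valid_word d w}"

lemma fin_subspace: "fm.subspace (fin d)" unfolding fin_def by simp

lemma pre_fin: "valid_gen d g \<Longrightarrow> f \<in> fin d \<Longrightarrow> pre g f \<in> fin d"
  unfolding fin_def
  apply (erule span_map[where L="pre g"])
  by (auto intro!: fm.span_base)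

lemma act_vv_fin: "1 \<le> i \<Longrightarrow> i \<le> d \<Longrightarrow> 1 \<le> j \<Longrightarrow> j \<le> d \<Longrightarrow> f \<in> fin d \<Longrightarrow> act (vv i j p q) f \<in> fin d"
  unfolding act_vv
  by (intro fm.subspace_add[OF fin_subspace] fm.subspace_scale[OF fin_subspace] pre_fin valid_G) auto

lemma lam_sum: "(\<lambda>t. \<Sum>h\<in>S. F h t) = (\<Sum>h\<in>S. F h)"
  by (simp add: fun_eq_iff sum_fun_apply)

lemma Lop_fin:
  assumes "1 \<le> i" "i \<le> d" "1 \<le> j" "j \<le> d" "f \<in> fin d"
  shows "Lop d r i j m f \<in> fin d"
proof (cases "i \<noteq> j \<or> m \<noteq> 0")
  case True
  let ?S = "{h. act (vv i j (m - h) h) f \<notin> Ker d r}"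
  have "Lop d r i j m f = sc (1/2) (\<Sum>h\<in>?S. act (vv i j (m - h) h) f)"
    using True by (simp add: Lop_def sc_def sum_fun_apply fun_eq_iff)
  also have "\<dots> \<in> fin d"
    using assms by (intro fm.subspace_scale[OF fin_subspace] fm.subspace_sum[OF fin_subspace] act_vv_fin) auto
  finally show ?thesis .
next
  case False
  let ?S = "{h. 0 < h \<and> act (vv i i (- h) h) f \<notin> Ker d r}"
  have "Lop d r i j m f = sc (1/2) (act (vv i i 0 0) f) + (\<Sum>h\<in>?S. act (vv i i (- h) h) f)"
    using False by (simp add: Lop_def sc_def sum_fun_apply fun_eq_iff)
  also have "\<dots> \<in> fin d"
    using assms False by (intro fm.subspace_add[OF fin_subspace] fm.subspace_scale[OF fin_subspace]
        fm.subspace_sum[OF fin_subspace] act_vv_fin) auto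
  finally show ?thesis .
qed

lemma Lvecs_fin: "x \<in> Lvecs d r \<Longrightarrow> x \<in> fin d"
proof -
  have "\<forall>(i, j, m) \<in> set qs. 1 \<le> i \<and> i \<le> d \<and> 1 \<le> j \<and> j \<le> d \<Longrightarrow>
        foldr (\<lambda>(i, j, m) f. Lop d r i j m f) qs (wd []) \<in> fin d" for qs
  proof (induction qs)
    case Nil then show ?case unfolding fin_def by (intro fm.span_base) auto
  next
    case (Cons q qs)
    obtain i j m where q: "q = (i, j, m)" by (cases q) auto
    show ?case using Cons q by (auto intro!: Lop_fin)
  qed
  then show "x \<in> Lvecs d r \<Longrightarrow> x \<in> fin d" unfolding Lvecs_def by auto
qed

lemma fin_NK: "f \<in> fin d \<Longrightarrow> f \<in> NK d r"
proof -
  have "{wd w | w. valid_word d w} \<subseteq> NK d r" by (auto intro: NF)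
  from fm.span_minimal[OF this NK_subspace] show "f \<in> fin d \<Longrightarrow> f \<in> NK d r" unfolding fin_def by auto
qed

lemma Lop_sum:
  assumes "\<not> (i = j \<and> m = 0)" "finite H" "\<And>h. h \<notin> H \<Longrightarrow> pre (G i j (m - h) h) f \<in> Ker d r"
  shows "Lop d r i j m f - sc (1/2) (\<Sum>h\<in>H. pre (G i j (m - h) h) f) \<in> Ker d r"
proof -
  have av: "act (vv i j (m - h) h) f = pre (G i j (m - h) h) f" for h
    using assms(1) by (intro act_vv_G) auto
  let ?S = "{h. pre (G i j (m - h) h) f \<notin> Ker d r}"
  have SH: "?S \<subseteq> H" using assms(3) by auto
  have "Lop d r i j m f = sc (1/2) (\<Sum>h\<in>?S. pre (G i j (m - h) h) f)"
    using assms(1) by (simp add: Lop_def av sc_def sum_fun_apply fun_eq_iff)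
  moreover have "(\<Sum>h\<in>H. pre (G i j (m - h) h) f) = (\<Sum>h\<in>?S. pre (G i j (m - h) h) f) + (\<Sum>h\<in>H - ?S. pre (G i j (m - h) h) f)"
    using SH assms(2) by (metis (no_types, lifting) add.commute sum.subset_diff)
  ultimately have "Lop d r i j m f - sc (1/2) (\<Sum>h\<in>H. pre (G i j (m - h) h) f) = sc (- 1/2) (\<Sum>h\<in>H - ?S. pre (G i j (m - h) h) f)"
    by (simp add: sc_def fun_eq_iff algebra_simps)
  also have "\<dots> \<in> Ker d r"
    by (intro fm.subspace_scale[OF Ker_subspace] fm.subspace_sum[OF Ker_subspace]) auto
  finally show ?thesis .
qed

lemma ins_zero': "ins u (\<lambda>_. 0) w = 0" by (auto simp: ins_def fun_eq_iff)

lemma nocontr_Ker: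
  assumes "valid_word d X" "valid_gen d g" "in_Bplus g" "\<forall>x\<in>set X. brk r g x = (\<lambda>_. 0)"
  shows "wd (g # X) \<in> Ker d r"
  using assms
proof (induction X)
  case Nil then show ?case using rel_Bplus[of d "[]" g r] by simp
next
  case (Cons x X)
  have e: "wd (g # x # X) = (wd ([] @ g # x # X) - wd ([] @ x # g # X) - ins [] (brk r g x) X)
      + pre x (wd (g # X))" using Cons.prems(4) by (simp add: ins_zero')
  show ?case unfolding e
    by (intro fm.subspace_add[OF Ker_subspace] rel_comm pre_Ker Cons.IH) (use Cons.prems in auto)
qed

fun modes :: "gen \<Rightarrow> int set" where
  "modes (V i j a b) = {a, b}"
| "modes One = {}"

definition HX :: "int \<Rightarrow> gen list \<Rightarrow> int set" where
  "HX m X = {h. m < h \<and> h < 0} \<union> (\<Union>x\<in>set X. \<Union>a\<in>modes x. {- a, m + a})"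

lemma finite_modes: "finite (modes x)" by (cases x) auto

lemma finite_HX: "finite (HX m X)"
proof -
  have "{h. m < h \<and> h < 0} = {m<..<0}" by auto
  then show ?thesis unfolding HX_def using finite_modes by auto
qed

lemma G_cases: "\<exists>i' j'. G i j p q = V i' j' p q \<or> G i j p q = V i' j' q p"
  by (auto simp: G_def)

lemma in_Bplus_G: "0 \<le> p \<or> 0 \<le> q \<Longrightarrow> in_Bplus (G i j p q)"
  by (auto simp: G_def)

lemma brk_G_zero:
  assumes "h \<noteq> - c" "h \<noteq> - e" "h \<noteq> m + c" "h \<noteq> m + e"
  shows "brk r (G i j (m - h) h) (V k l c e) = (\<lambda>_. 0)"
proof -
  have "h + c \<noteq> 0" "h + e \<noteq> 0" "m - h + c \<noteq> 0" "m - h + e \<noteq> 0" using assms by auto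
  then show ?thesis using G_cases[of i j "m - h" h] by (auto simp: brk_def kd_def fun_eq_iff)
qed

lemma HX_Ker:
  assumes "valid_word d X" "1 \<le> i" "i \<le> d" "1 \<le> j" "j \<le> d" "h \<notin> HX m X"
  shows "pre (G i j (m - h) h) (wd X) \<in> Ker d r"
proof -
  have "wd (G i j (m - h) h # X) \<in> Ker d r"
  proof (rule nocontr_Ker)
    show "valid_gen d (G i j (m - h) h)" using assms by (intro valid_G) auto
    show "in_Bplus (G i j (m - h) h)" using assms(6) by (intro in_Bplus_G) (auto simp: HX_def)
    show "\<forall>x\<in>set X. brk r (G i j (m - h) h) x = (\<lambda>_. 0)"
    proof
      fix x assume x: "x \<in> set X"
      show "brk r (G i j (m - h) h) x = (\<lambda>_. 0)"
      proof (cases x)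
        case (V k l c e)
        then show ?thesis unfolding V using assms(6) x V by (intro brk_G_zero) (auto simp: HX_def)
      next
        case One then show ?thesis by (simp add: brk_def brkA_One2 fun_eq_iff)
      qed
    qed
  qed (use assms in auto)
  then show ?thesis by simp
qed

lemma zero_lam: "(\<lambda>a. 0) = (0 :: 'a \<Rightarrow> complex)" by (simp add: zero_fun_def)

lemma FIN:
  assumes "f \<in> fin d" "1 \<le> i" "i \<le> d" "1 \<le> j" "j \<le> d"
  shows "\<exists>H. finite H \<and> (\<forall>h. h \<notin> H \<longrightarrow> pre (G i j (m - h) h) f \<in> Ker d r)"
proof -
  have "f \<in> NK d r" using assms(1) by (rule fin_NK)
  then show ?thesis unfolding NK_def
  proof (induction rule: fm.span_induct_alt)
    case base
    have "pre (G i j (m - h) h) 0 \<in> Ker d r" for h by (simp add: fm.subspace_0[OF Ker_subspace])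
    then show ?case by (intro exI[of _ "{}"]) (simp add: zero_lam)
  next
    case (step c x y)
    then obtain H where H: "finite H" "\<forall>h. h \<notin> H \<longrightarrow> pre (G i j (m - h) h) y \<in> Ker d r" by blast
    have "\<exists>H'. finite H' \<and> (\<forall>h. h \<notin> H' \<longrightarrow> pre (G i j (m - h) h) x \<in> Ker d r)"
    proof (cases "x \<in> Ker d r")
      case True
      then show ?thesis using assms by (intro exI[of _ "{}"]) (auto intro!: pre_Ker valid_G)
    next
      case False
      then obtain X where X: "x = wd X" "valid_word d X" using step.hyps by (auto simp: NB_def)
      show ?thesis using X assms HX_Ker[of d X i j _ m r] by (intro exI[of _ "HX m X"]) (auto simp: finite_HX)
    qed
    then obtain H' where H': "finite H'" "\<forall>h. h \<notin> H' \<longrightarrow> pre (G i j (m - h) h) x \<in> Ker d r" by blast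
    have "\<forall>h. h \<notin> H \<union> H' \<longrightarrow> pre (G i j (m - h) h) (sc c x + y) \<in> Ker d r"
    proof (intro allI impI)
      fix h assume "h \<notin> H \<union> H'"
      then have "pre (G i j (m - h) h) x \<in> Ker d r" "pre (G i j (m - h) h) y \<in> Ker d r" using H H' by auto
      then show "pre (G i j (m - h) h) (sc c x + y) \<in> Ker d r"
        unfolding pre_add pre_sc by (rule fm.subspace_add[OF Ker_subspace fm.subspace_scale[OF Ker_subspace]])
    qed
    then have main: "\<exists>H''. finite H'' \<and> (\<forall>h. h \<notin> H'' \<longrightarrow> pre (G i j (m - h) h) (sc c x + y) \<in> Ker d r)"
      using H(1) H'(1) by (intro exI[of _ "H \<union> H'"]) simp
    show ?case using main unfolding plus_fun_def .
  qed
qed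

lemma span_ind[consumes 1, case_names base step]:
  assumes "x \<in> fm.span S" "P 0" "\<And>c x y. x \<in> S \<Longrightarrow> y \<in> fm.span S \<Longrightarrow> P y \<Longrightarrow> P (sc c x + y)"
  shows "P x"
proof -
  have "x \<in> fm.span S \<and> P x" using assms(1)
  proof (induction rule: fm.span_induct_alt)
    case base then show ?case using assms(2) fm.span_zero[of S] by (simp add: zero_fun_def)
  next
    case (step c x y)
    have "sc c x + y \<in> fm.span S \<and> P (sc c x + y)" using step assms(3)
      by (auto intro!: fm.span_add[OF fm.span_scale[OF fm.span_base]])
    then show ?case unfolding plus_fun_def .
  qed
  then show ?thesis by simp
qed

definition IV :: "nat \<Rightarrow> complex \<Rightarrow> (gen list \<Rightarrow> complex) set" where
  "IV d r = {f. \<exists>g\<in>fm.span (Lvecs d r). f - g \<in> Ker d r}"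

lemma IV_subspace: "fm.subspace (IV d r)"
proof (rule fm.subspaceI)
  show "0 \<in> IV d r" unfolding IV_def
    by (rule CollectI, rule bexI[of _ 0]) (simp_all add: fm.span_zero fm.subspace_0[OF Ker_subspace])
next
  fix x y assume "x \<in> IV d r" "y \<in> IV d r"
  then obtain gx gy where "gx \<in> fm.span (Lvecs d r)" "x - gx \<in> Ker d r" "gy \<in> fm.span (Lvecs d r)" "y - gy \<in> Ker d r"
    unfolding IV_def by blast
  moreover have "x + y - (gx + gy) = (x - gx) + (y - gy)" by simp
  ultimately have "x + y - (gx + gy) \<in> Ker d r" "gx + gy \<in> fm.span (Lvecs d r)"
    by (metis Ker_subspace fm.subspace_add, metis fm.span_add)
  then show "x + y \<in> IV d r" unfolding IV_def by blast
next
  fix c x assume "x \<in> IV d r"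
  then obtain gx where "gx \<in> fm.span (Lvecs d r)" "x - gx \<in> Ker d r" unfolding IV_def by blast
  moreover have "sc c x - sc c gx = sc c (x - gx)" by (simp add: sc_def fun_eq_iff algebra_simps)
  ultimately show "sc c x \<in> IV d r" unfolding IV_def
    by (intro CollectI bexI[of _ "sc c gx"]) (auto intro!: fm.span_scale fm.subspace_scale[OF Ker_subspace])
qed

lemma Ker_IV: "f \<in> Ker d r \<Longrightarrow> f \<in> IV d r"
  unfolding IV_def by (intro CollectI bexI[of _ 0]) (simp_all add: fm.span_zero)

lemma IV_eqv: "f - g \<in> Ker d r \<Longrightarrow> g \<in> IV d r \<Longrightarrow> f \<in> IV d r"
proof -
  assume "f - g \<in> Ker d r" "g \<in> IV d r"
  moreover have "f = (f - g) + g" by simp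
  ultimately show ?thesis by (metis Ker_IV IV_subspace fm.subspace_add)
qed

lemma Ker_diff_trans: "a - b \<in> Ker d r \<Longrightarrow> b - c \<in> Ker d r \<Longrightarrow> a - c \<in> Ker d r"
proof -
  assume "a - b \<in> Ker d r" "b - c \<in> Ker d r"
  moreover have "a - c = (a - b) + (b - c)" by simp
  ultimately show ?thesis by (metis Ker_subspace fm.subspace_add)
qed

lemma Lop_Lvecs:
  assumes "x \<in> Lvecs d r" "1 \<le> i" "i \<le> d" "1 \<le> j" "j \<le> d"
  shows "Lop d r i j m x \<in> Lvecs d r"
proof -
  obtain qs where "x = foldr (\<lambda>(i, j, m) f. Lop d r i j m f) qs (wd [])"
    "\<forall>(i, j, m) \<in> set qs. 1 \<le> i \<and> i \<le> d \<and> 1 \<le> j \<and> j \<le> d"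
    using assms(1) unfolding Lvecs_def by blast
  then show ?thesis unfolding Lvecs_def using assms(2-5)
    by (intro CollectI exI[of _ "(i, j, m) # qs"]) auto
qed

lemma wd_Nil_IV: "wd [] \<in> IV d r"
proof -
  have "wd [] \<in> Lvecs d r" unfolding Lvecs_def by (intro CollectI exI[of _ "[]"]) simp
  then show ?thesis unfolding IV_def by (intro CollectI bexI[of _ "wd []"]) (simp_all add: fm.span_base fm.subspace_0[OF Ker_subspace])
qed

definition Ssum :: "nat \<Rightarrow> nat \<Rightarrow> int \<Rightarrow> int set \<Rightarrow> (gen list \<Rightarrow> complex) \<Rightarrow> gen list \<Rightarrow> complex" where
  "Ssum i j m H f = sc (1/2) (\<Sum>h\<in>H. pre (G i j (m - h) h) f)"

lemma Ssum_lin: "Ssum i j m H (sc c f1 + f2) = sc c (Ssum i j m H f1) + Ssum i j m H f2"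
  unfolding Ssum_def pre_add pre_sc by (simp add: sc_def fun_eq_iff sum_fun_apply sum.distrib sum_distrib_left algebra_simps)

lemma Ssum_Ker: "1 \<le> i \<Longrightarrow> i \<le> d \<Longrightarrow> 1 \<le> j \<Longrightarrow> j \<le> d \<Longrightarrow> f \<in> Ker d r \<Longrightarrow> Ssum i j m H f \<in> Ker d r"
  unfolding Ssum_def
  by (intro fm.subspace_scale[OF Ker_subspace] fm.subspace_sum[OF Ker_subspace] pre_Ker valid_G) auto

lemma fin_lin: "f1 \<in> fin d \<Longrightarrow> f2 \<in> fin d \<Longrightarrow> sc c f1 + f2 \<in> fin d"
  by (intro fm.subspace_add[OF fin_subspace] fm.subspace_scale[OF fin_subspace])

lemma Lop_lin:
  assumes "f1 \<in> fin d" "f2 \<in> fin d" "\<not> (i = j \<and> m = 0)" "1 \<le> i" "i \<le> d" "1 \<le> j" "j \<le> d"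
  shows "Lop d r i j m (sc c f1 + f2) - (sc c (Lop d r i j m f1) + Lop d r i j m f2) \<in> Ker d r"
proof -
  obtain H1 where H1: "finite H1" "\<forall>h. h \<notin> H1 \<longrightarrow> pre (G i j (m - h) h) f1 \<in> Ker d r" using FIN[OF assms(1,4-7), where m=m and r=r] by blast
  obtain H2 where H2: "finite H2" "\<forall>h. h \<notin> H2 \<longrightarrow> pre (G i j (m - h) h) f2 \<in> Ker d r" using FIN[OF assms(2,4-7), where m=m and r=r] by blast
  obtain H3 where H3: "finite H3" "\<forall>h. h \<notin> H3 \<longrightarrow> pre (G i j (m - h) h) (sc c f1 + f2) \<in> Ker d r"
    using FIN[OF fin_lin[OF assms(1,2)] assms(4-7), where m=m and r=r] by blast
  let ?H = "H1 \<union> H2 \<union> H3"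
  have fH: "finite ?H" using H1 H2 H3 by simp
  have a1: "Lop d r i j m f1 - Ssum i j m ?H f1 \<in> Ker d r" unfolding Ssum_def
    by (rule Lop_sum[OF assms(3) fH]) (use H1 in auto)
  have a2: "Lop d r i j m f2 - Ssum i j m ?H f2 \<in> Ker d r" unfolding Ssum_def
    by (rule Lop_sum[OF assms(3) fH]) (use H2 in auto)
  have a3: "Lop d r i j m (sc c f1 + f2) - Ssum i j m ?H (sc c f1 + f2) \<in> Ker d r" unfolding Ssum_def
    by (rule Lop_sum[OF assms(3) fH]) (use H3 in auto)
  have "Lop d r i j m (sc c f1 + f2) - (sc c (Lop d r i j m f1) + Lop d r i j m f2) =
    (Lop d r i j m (sc c f1 + f2) - Ssum i j m ?H (sc c f1 + f2)) - (sc c (Lop d r i j m f1 - Ssum i j m ?H f1) + (Lop d r i j m f2 - Ssum i j m ?H f2))"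
    unfolding Ssum_lin by (simp add: sc_def fun_eq_iff algebra_simps)
  also have "\<dots> \<in> Ker d r"
    by (rule fm.subspace_diff[OF Ker_subspace a3 fm.subspace_add[OF Ker_subspace fm.subspace_scale[OF Ker_subspace a1] a2]])
  finally show ?thesis .
qed

lemma Lop_Ker:
  assumes "f \<in> fin d" "f \<in> Ker d r" "\<not> (i = j \<and> m = 0)" "1 \<le> i" "i \<le> d" "1 \<le> j" "j \<le> d"
  shows "Lop d r i j m f \<in> Ker d r"
proof -
  obtain H where H: "finite H" "\<forall>h. h \<notin> H \<longrightarrow> pre (G i j (m - h) h) f \<in> Ker d r" using FIN[OF assms(1,4-7), where m=m and r=r] by blast
  have a: "Lop d r i j m f - Ssum i j m H f \<in> Ker d r" unfolding Ssum_def
    by (rule Lop_sum[OF assms(3) H(1)]) (use H in auto)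
  have "Lop d r i j m f = (Lop d r i j m f - Ssum i j m H f) + Ssum i j m H f" by simp
  also have "\<dots> \<in> Ker d r" using a Ssum_Ker[OF assms(4-7,2)]
    by (intro fm.subspace_add[OF Ker_subspace])
  finally show ?thesis .
qed

lemma span_Lvecs_fin: "g \<in> fm.span (Lvecs d r) \<Longrightarrow> g \<in> fin d"
  using fm.span_minimal[OF _ fin_subspace, of "Lvecs d r" d] Lvecs_fin by blast

lemma Lop_span_Lvecs:
  assumes "g \<in> fm.span (Lvecs d r)" "\<not> (i = j \<and> m = 0)" "1 \<le> i" "i \<le> d" "1 \<le> j" "j \<le> d"
  shows "\<exists>g'\<in>fm.span (Lvecs d r). Lop d r i j m g - g' \<in> Ker d r"
  using assms(1)
proof (induction rule: span_ind)
  case base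
  have "Lop d r i j m 0 \<in> Ker d r"
    by (rule Lop_Ker[OF _ _ assms(2-6)]) (simp_all add: fm.subspace_0[OF fin_subspace] fm.subspace_0[OF Ker_subspace])
  then have "Lop d r i j m 0 - 0 \<in> Ker d r" by (simp only: diff_zero)
  moreover have "0 \<in> fm.span (Lvecs d r)" by (rule fm.span_zero)
  ultimately show ?case by blast
next
  case (step c x y)
  then obtain gy where gy: "gy \<in> fm.span (Lvecs d r)" "Lop d r i j m y - gy \<in> Ker d r" by blast
  have xf: "x \<in> fin d" using step.hyps(1) by (rule Lvecs_fin)
  have yf: "y \<in> fin d" using step.hyps(2) by (rule span_Lvecs_fin)
  have l: "Lop d r i j m (sc c x + y) - (sc c (Lop d r i j m x) + Lop d r i j m y) \<in> Ker d r"
    by (rule Lop_lin[OF xf yf assms(2-6)])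
  have "Lop d r i j m (sc c x + y) - (sc c (Lop d r i j m x) + gy) =
     (Lop d r i j m (sc c x + y) - (sc c (Lop d r i j m x) + Lop d r i j m y)) + (Lop d r i j m y - gy)"
    by simp
  also have "\<dots> \<in> Ker d r" using l gy(2) by (rule fm.subspace_add[OF Ker_subspace])
  finally have k: "Lop d r i j m (sc c x + y) - (sc c (Lop d r i j m x) + gy) \<in> Ker d r" .
  have "sc c (Lop d r i j m x) + gy \<in> fm.span (Lvecs d r)"
    using Lop_Lvecs[OF step.hyps(1) assms(3-6)] gy(1) by (intro fm.span_add[OF fm.span_scale[OF fm.span_base]])
  then show ?case using k by blast
qed

lemma LopIV:
  assumes "f \<in> fin d" "f \<in> IV d r" "\<not> (i = j \<and> m = 0)" "1 \<le> i" "i \<le> d" "1 \<le> j" "j \<le> d"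
  shows "Lop d r i j m f \<in> IV d r"
proof -
  obtain g where g: "g \<in> fm.span (Lvecs d r)" "f - g \<in> Ker d r" using assms(2) unfolding IV_def by blast
  obtain g' where g': "g' \<in> fm.span (Lvecs d r)" "Lop d r i j m g - g' \<in> Ker d r"
    using Lop_span_Lvecs[OF g(1) assms(3-7)] by blast
  have gf: "g \<in> fin d" using g(1) by (rule span_Lvecs_fin)
  have l: "Lop d r i j m (sc (-1) g + f) - (sc (-1) (Lop d r i j m g) + Lop d r i j m f) \<in> Ker d r"
    by (rule Lop_lin[OF gf assms(1) assms(3-7)])
  have e1: "sc (-1) g + f = f - g" by (simp add: sc_def fun_eq_iff)
  have k1: "Lop d r i j m (sc (-1) g + f) \<in> Ker d r" unfolding e1
    by (rule Lop_Ker[OF _ g(2) assms(3-7)]) (rule fm.subspace_diff[OF fin_subspace assms(1) gf])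
  have "Lop d r i j m f - g' = (Lop d r i j m (sc (-1) g + f) - (Lop d r i j m (sc (-1) g + f) - (sc (-1) (Lop d r i j m g) + Lop d r i j m f))) + (Lop d r i j m g - g')"
    by (simp add: sc_def fun_eq_iff)
  also have "\<dots> \<in> Ker d r"
    by (rule fm.subspace_add[OF Ker_subspace fm.subspace_diff[OF Ker_subspace k1 l] g'(2)])
  finally show ?thesis unfolding IV_def using g'(1) by blast
qed

definition BW :: "nat \<Rightarrow> nat \<Rightarrow> gen list set" where
  "BW d n = {X. valid_word d X \<and> list_all negm X \<and> length X = n}"

definition Claim :: "nat \<Rightarrow> complex \<Rightarrow> nat \<Rightarrow> bool" where
  "Claim d r n = (\<forall>X\<in>BW d n. wd X \<in> IV d r)"

definition NKn :: "nat \<Rightarrow> complex \<Rightarrow> nat \<Rightarrow> (gen list \<Rightarrow> complex) set" where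
  "NKn d r n = fm.span ({wd X | X. X \<in> BW d n} \<union> Ker d r)"

definition UU :: "nat \<Rightarrow> complex \<Rightarrow> nat \<Rightarrow> (gen \<Rightarrow> complex) set" where
  "UU d r n = {q. \<forall>X\<in>BW d n. act q (wd X) \<in> IV d r}"

lemma NKn_subspace: "fm.subspace (NKn d r n)" unfolding NKn_def by simp

lemma Ker_NKn: "f \<in> Ker d r \<Longrightarrow> f \<in> NKn d r n"
  unfolding NKn_def by (simp add: fm.span_base)

lemma BW_NKn: "X \<in> BW d n \<Longrightarrow> wd X \<in> NKn d r n"
  unfolding NKn_def by (rule fm.span_base) blast

lemma NKn_IV: "Claim d r n \<Longrightarrow> f \<in> NKn d r n \<Longrightarrow> f \<in> IV d r"
  unfolding NKn_def Claim_def
  by (erule fm.span_minimal[OF _ IV_subspace, THEN subsetD, rotated]) (auto intro: Ker_IV)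

lemma UU_subspace: "fm.subspace (UU d r n)"
proof (rule fm.subspaceI)
  show "0 \<in> UU d r n" unfolding UU_def
    using fm.subspace_0[OF IV_subspace] by (simp add: act_zzero)
  show "x + y \<in> UU d r n" if "x \<in> UU d r n" "y \<in> UU d r n" for x y
    using that unfolding UU_def by (simp add: act_zadd fm.subspace_add[OF IV_subspace])
  show "sc c x \<in> UU d r n" if "x \<in> UU d r n" for c x
    using that unfolding UU_def by (simp add: act_zsc fm.subspace_scale[OF IV_subspace])
qed

lemma BW_NKn_Cons: "X \<in> BW d n \<Longrightarrow> valid_gen d x \<Longrightarrow> negm x \<Longrightarrow> pre x (wd X) \<in> NKn d r (Suc n)"
  by (simp, rule BW_NKn) (simp add: BW_def)

lemma pre_NKn:
  assumes "valid_gen d x" "negm x" "f \<in> NKn d r n"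
  shows "pre x f \<in> NKn d r (Suc n)"
  using assms(3) unfolding NKn_def[of d r n]
  apply (rule span_map[where L="pre x"])
    apply simp apply simp
  subgoal for y
    apply (elim UnE)
    using assms(1,2) apply (auto intro!: BW_NKn_Cons)[1]
    using assms(1) by (simp add: pre_Ker Ker_NKn)
  by (rule NKn_subspace)

lemma semi_Bplus: "semi g \<Longrightarrow> in_Bplus g" by (cases g) auto

lemma COMM_semi:
  assumes "valid_gen d g" "semi g" "X \<in> BW d n"
  shows "wd (g # X) \<in> NKn d r n"
  using assms
proof (induction X arbitrary: n)
  case Nil
  then show ?case using rel_Bplus[of d "[]" g r] semi_Bplus[of g] by (simp add: Ker_NKn)
next
  case (Cons x X)
  then obtain n' where n: "n = Suc n'" "X \<in> BW d n'" "valid_gen d x" "negm x" by (auto simp: BW_def)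
  have e: "wd (g # x # X) = (wd ([] @ g # x # X) - wd ([] @ x # g # X) - ins [] (brk r g x) X)
      + pre x (wd (g # X)) + ins [] (brk r g x) X" by simp
  have 1: "wd ([] @ g # x # X) - wd ([] @ x # g # X) - ins [] (brk r g x) X \<in> NKn d r n"
    by (rule Ker_NKn, rule rel_comm) (use Cons.prems n in \<open>auto simp: BW_def\<close>)
  have 2: "pre x (wd (g # X)) \<in> NKn d r n"
    unfolding n(1) by (rule pre_NKn[OF n(3,4) Cons.IH[OF Cons.prems(1,2) n(2)]])
  have 3: "ins [] (brk r g x) X \<in> fm.span {wd ([] @ g' # X) | g'. valid_gen d g' \<and> negm g'}"
    by (rule ins_span, rule brk_semi_span) (use Cons.prems n in auto)
  have 4: "fm.span {wd ([] @ g' # X) | g'. valid_gen d g' \<and> negm g'} \<subseteq> NKn d r n"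
    by (rule fm.span_minimal[OF _ NKn_subspace]) (use n in \<open>auto intro!: BW_NKn simp: BW_def\<close>)
  show ?case unfolding e using 1 2 3 4 by (intro fm.subspace_add[OF NKn_subspace]) auto
qed

lemma semi_G: "m \<le> 0 \<Longrightarrow> \<not> (m < h \<and> h < 0) \<Longrightarrow> semi (G i j (m - h) h)"
  by (auto simp: G_def)

lemma wd_fin: "valid_word d X \<Longrightarrow> wd X \<in> fin d"
  unfolding fin_def by (rule fm.span_base) blast

lemma LopX:
  assumes "valid_word d X" "\<not> (i = j \<and> m = 0)" "1 \<le> i" "i \<le> d" "1 \<le> j" "j \<le> d" "finite H" "HX m X \<subseteq> H"
  shows "Lop d r i j m (wd X) - Ssum i j m H (wd X) \<in> Ker d r"
  unfolding Ssum_def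
  by (rule Lop_sum[OF assms(2,7)]) (use assms HX_Ker[of d X i j _ m r] in auto)

lemma act_zsum: "act (\<Sum>h\<in>A. z h) f = (\<Sum>h\<in>A. act (z h) f)"
  by (simp add: act_def fun_eq_iff sum_fun_apply sum_distrib_right split: list.splits)

lemma pre_sum: "pre g (\<Sum>h\<in>A. f h) = (\<Sum>h\<in>A. pre g (f h))"
  by (simp add: pre_def act_def fun_eq_iff sum_fun_apply sum_distrib_left split: list.splits)

lemma act_delta: "act (delta g) f = pre g f" by (simp add: pre_def)

definition cc :: "nat \<Rightarrow> nat \<Rightarrow> int \<Rightarrow> gen \<Rightarrow> complex" where
  "cc i j m = sc (1/2) (\<Sum>h\<in>{m<..<0}. delta (G i j (m - h) h))"

lemma Ssum_NKn:
  assumes "X \<in> BW d n" "m \<le> 0" "\<And>h. h \<in> A \<Longrightarrow> \<not> (m < h \<and> h < 0)" "1 \<le> i" "i \<le> d" "1 \<le> j" "j \<le> d"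
  shows "Ssum i j m A (wd X) \<in> NKn d r n"
  unfolding Ssum_def
  by (intro fm.subspace_scale[OF NKn_subspace] fm.subspace_sum[OF NKn_subspace], simp only: pre_wd,
      rule COMM_semi[OF valid_G semi_G]) (use assms in auto)

lemma c_in_U:
  assumes "Claim d r n" "1 \<le> i" "i \<le> d" "1 \<le> j" "j \<le> d" "m < 0"
  shows "cc i j m \<in> UU d r n"
  unfolding UU_def
proof (intro CollectI ballI)
  fix X assume X: "X \<in> BW d n"
  have vX: "valid_word d X" using X by (simp add: BW_def)
  let ?A = "{m<..<0}" and ?H = "HX m X"
  have AH: "?A \<subseteq> ?H" by (auto simp: HX_def)
  have k: "Lop d r i j m (wd X) - Ssum i j m ?H (wd X) \<in> Ker d r"
    by (rule LopX[OF vX]) (use assms in \<open>auto simp: finite_HX\<close>)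
  have L: "Lop d r i j m (wd X) \<in> IV d r"
    by (rule LopIV[OF wd_fin[OF vX]]) (use assms X in \<open>auto simp: Claim_def\<close>)
  have split: "Ssum i j m ?H (wd X) = Ssum i j m ?A (wd X) + Ssum i j m (?H - ?A) (wd X)"
    unfolding Ssum_def using AH finite_HX[of m X]
    by (simp add: sum.subset_diff[of ?A ?H] sc_def fun_eq_iff algebra_simps sum_fun_apply)
  have R: "Ssum i j m (?H - ?A) (wd X) \<in> IV d r"
    by (rule NKn_IV[OF assms(1) Ssum_NKn[OF X]]) (use assms in auto)
  have ac: "act (cc i j m) (wd X) = Ssum i j m ?A (wd X)"
    unfolding cc_def Ssum_def act_zsc act_zsum act_delta ..
  have "act (cc i j m) (wd X) = Lop d r i j m (wd X) - (Lop d r i j m (wd X) - Ssum i j m ?H (wd X)) - Ssum i j m (?H - ?A) (wd X)"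
    unfolding ac split by simp
  also have "\<dots> \<in> IV d r"
    by (rule fm.subspace_diff[OF IV_subspace fm.subspace_diff[OF IV_subspace L Ker_IV[OF k]] R])
  finally show "act (cc i j m) (wd X) \<in> IV d r" .
qed

lemma pre_to_IV:
  assumes "delta y \<in> UU d r n" "valid_gen d y" "f \<in> NKn d r n"
  shows "pre y f \<in> IV d r"
  using assms(3) unfolding NKn_def
  apply (rule span_map[where L="pre y"])
    apply simp apply simp
  subgoal for x
    apply (elim UnE)
    using assms(1) apply (auto simp: UU_def act_delta)[1]
    using assms(2) by (simp add: pre_Ker Ker_IV)
  by (rule IV_subspace)

lemma Dstep:
  assumes "Claim d r n" "valid_gen d y" "negm y" "delta y \<in> UU d r n" "-1 \<le> m" "m \<le> 0"
    "\<not> (i = j \<and> m = 0)" "1 \<le> i" "i \<le> d" "1 \<le> j" "j \<le> d" "finite H0"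
    "\<And>h. h \<notin> H0 \<Longrightarrow> brk r (G i j (m - h) h) y = 0"
  shows "sc (1/2) (\<Sum>h\<in>H0. brk r (G i j (m - h) h) y) \<in> UU d r n"
  unfolding UU_def
proof (intro CollectI ballI)
  fix X assume X: "X \<in> BW d n"
  have vX: "valid_word d X" using X by (simp add: BW_def)
  have vyX: "valid_word d (y # X)" using vX assms(2) by simp
  let ?H = "H0 \<union> HX m X \<union> HX m (y # X)"
  let ?G = "\<lambda>h. G i j (m - h) h"
  have fH: "finite ?H" using assms(12) by (simp add: finite_HX)
  have vG: "valid_gen d (?G h)" for h using assms(8-11) by (intro valid_G)
  have k1: "Lop d r i j m (wd (y # X)) - Ssum i j m ?H (wd (y # X)) \<in> Ker d r"
    by (rule LopX[OF vyX assms(7-11) fH]) auto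
  have k2: "Lop d r i j m (wd X) - Ssum i j m ?H (wd X) \<in> Ker d r"
    by (rule LopX[OF vX assms(7-11) fH]) auto
  have N: "Ssum i j m ?H (wd X) \<in> NKn d r n"
    by (rule Ssum_NKn[OF X]) (use assms in auto)
  have k4: "pre (?G h) (wd (y # X)) - (pre y (pre (?G h) (wd X)) + act (brk r (?G h) y) (wd X)) \<in> Ker d r" for h
  proof -
    have "wd ([] @ ?G h # y # X) - wd ([] @ y # ?G h # X) - ins [] (brk r (?G h) y) X \<in> Ker d r"
      by (rule rel_comm) (use vX vG assms(2) in auto)
    then show ?thesis by (simp add: act_wd diff_diff_eq)
  qed
  let ?z = "sc (1/2) (\<Sum>h\<in>H0. brk r (?G h) y)"
  have zH: "(\<Sum>h\<in>?H. brk r (?G h) y) = (\<Sum>h\<in>H0. brk r (?G h) y)"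
    by (rule sum.mono_neutral_right) (use fH assms(13) in auto)
  have k5: "Ssum i j m ?H (wd (y # X)) - (pre y (Ssum i j m ?H (wd X)) + act ?z (wd X)) =
      sc (1/2) (\<Sum>h\<in>?H. pre (?G h) (wd (y # X)) - (pre y (pre (?G h) (wd X)) + act (brk r (?G h) y) (wd X)))"
    unfolding Ssum_def act_zsc pre_sc pre_sum zH[symmetric] act_zsum
    by (simp add: sc_def fun_eq_iff sum_fun_apply sum_subtractf sum.distrib algebra_simps)
  have k5': "Ssum i j m ?H (wd (y # X)) - (pre y (Ssum i j m ?H (wd X)) + act ?z (wd X)) \<in> Ker d r"
    unfolding k5 by (intro fm.subspace_scale[OF Ker_subspace] fm.subspace_sum[OF Ker_subspace] k4)
  have yX: "wd (y # X) \<in> IV d r" using assms(4) X by (auto simp: UU_def act_delta)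
  have L: "Lop d r i j m (wd (y # X)) \<in> IV d r"
    by (rule LopIV[OF wd_fin[OF vyX] yX assms(7-11)])
  have P: "pre y (Ssum i j m ?H (wd X)) \<in> IV d r"
    by (rule pre_to_IV[OF assms(4,2) N])
  have "act ?z (wd X) = Lop d r i j m (wd (y # X)) - (Lop d r i j m (wd (y # X)) - Ssum i j m ?H (wd (y # X)))
     - (Ssum i j m ?H (wd (y # X)) - (pre y (Ssum i j m ?H (wd X)) + act ?z (wd X))) - pre y (Ssum i j m ?H (wd X))"
    by simp
  also have "\<dots> \<in> IV d r"
    by (rule fm.subspace_diff[OF IV_subspace fm.subspace_diff[OF IV_subspace fm.subspace_diff[OF IV_subspace L Ker_IV[OF k1]] Ker_IV[OF k5']] P])
  finally show "act ?z (wd X) \<in> IV d r" .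
qed

lemma brk_raise:
  assumes "k \<noteq> l" "a < 0" "b < 0"
  shows "brk r (G k k (-1 - h) h) (G k l a b) = (if h = -a \<or> h = a - 1 then sc (-a) (delta (G k l (a - 1) b)) else 0)"
  using assms
  by (auto simp: brk_def G_def kd_def vv_def delta_def sc_def fun_eq_iff)

lemma brk_swap:
  assumes "k \<noteq> l" "a < 0" "b < 0"
  shows "brk r (G k l (0 - h) h) (G k l a b) = (if h = a then sc (-a) (delta (G l l a b)) else 0) + (if h = -b then sc (-b) (delta (G k k a b)) else 0)"
  using assms
  by (auto simp: brk_def G_def kd_def vv_def delta_def sc_def fun_eq_iff)

lemma brk_swap2:
  assumes "k \<noteq> l" "a < 0" "b < 0"
  shows "brk r (G k l (- h) h) (G k l a b) = (if h = a then sc (-a) (delta (G l l a b)) else 0) + (if h = -b then sc (-b) (delta (G k k a b)) else 0)"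
  using brk_swap[OF assms, of r h] by simp

lemma G_sym: "G i j p q = G j i q p"
  by (auto simp: G_def)

lemma cc_m2: "cc k l (-2) = sc (1/2) (delta (G k l (-1) (-1)))"
proof -
  have "{-2<..<0::int} = {-1}" by auto
  then show ?thesis by (simp add: cc_def)
qed

lemma U_mixed_base:
  assumes "Claim d r n" "1 \<le> k" "k \<le> d" "1 \<le> l" "l \<le> d"
  shows "delta (G k l (-1) (-1)) \<in> UU d r n"
proof -
  have "cc k l (-2) \<in> UU d r n" by (rule c_in_U) (use assms in auto)
  then have "sc 2 (cc k l (-2)) \<in> UU d r n" by (rule fm.subspace_scale[OF UU_subspace])
  moreover have "sc 2 (cc k l (-2)) = delta (G k l (-1) (-1))" unfolding cc_m2 by (simp add: sc_def fun_eq_iff)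
  ultimately show ?thesis by simp
qed

lemma U_raise:
  assumes "Claim d r n" "k \<noteq> l" "1 \<le> k" "k \<le> d" "1 \<le> l" "l \<le> d" "a < 0" "b < 0"
    "delta (G k l a b) \<in> UU d r n"
  shows "delta (G k l (a - 1) b) \<in> UU d r n"
proof -
  have vy: "valid_gen d (G k l a b)" using assms by (intro valid_G)
  have ny: "negm (G k l a b)" using assms by (intro negm_G)
  have "sc (1/2) (\<Sum>h\<in>{-a, a - 1}. brk r (G k k (-1 - h) h) (G k l a b)) \<in> UU d r n"
    by (rule Dstep[OF assms(1) vy ny assms(9)]) (use assms brk_raise[OF assms(2,7,8)] in auto)
  moreover have "sc (1/2) (\<Sum>h\<in>{-a, a - 1}. brk r (G k k (-1 - h) h) (G k l a b)) = sc (- of_int a) (delta (G k l (a - 1) b))"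
    using assms(7) by (simp add: brk_raise[OF assms(2,7,8)] sc_def fun_eq_iff)
  ultimately have "sc (- of_int a) (delta (G k l (a - 1) b)) \<in> UU d r n" by simp
  then have "sc (- 1 / of_int a) (sc (- of_int a) (delta (G k l (a - 1) b))) \<in> UU d r n"
    by (rule fm.subspace_scale[OF UU_subspace])
  moreover have "sc (- 1 / of_int a) (sc (- of_int a) (delta (G k l (a - 1) b))) = delta (G k l (a - 1) b)"
    using assms(7) by (simp add: sc_def fun_eq_iff)
  ultimately show ?thesis by simp
qed

lemma U_mixed_all:
  assumes "Claim d r n" "k \<noteq> l" "1 \<le> k" "k \<le> d" "1 \<le> l" "l \<le> d" "a < 0" "b < 0"
  shows "delta (G k l a b) \<in> UU d r n"
proof -
  have s1: "delta (G k' l' (-1 - int N) (-1)) \<in> UU d r n" if "k' \<noteq> l'" "1 \<le> k'" "k' \<le> d" "1 \<le> l'" "l' \<le> d" for N k' l'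
  proof (induction N)
    case 0 then show ?case using U_mixed_base[OF assms(1)] that by simp
  next
    case (Suc N)
    have "delta (G k' l' (-1 - int N - 1) (-1)) \<in> UU d r n"
      by (rule U_raise[OF assms(1) that]) (use Suc in auto)
    then show ?case by (simp add: algebra_simps)
  qed
  have s2: "delta (G k l (-1 - int N) (-1 - int M)) \<in> UU d r n" for N M
  proof (induction M)
    case 0 then show ?case using s1 assms by simp
  next
    case (Suc M)
    have "delta (G l k (-1 - int M - 1) (-1 - int N)) \<in> UU d r n"
      by (rule U_raise[OF assms(1)]) (use Suc assms in \<open>auto simp: G_sym[of k l]\<close>)
    then show ?case by (simp add: algebra_simps G_sym[of l k])
  qed
  have "a = -1 - int (nat (-1 - a))" "b = -1 - int (nat (-1 - b))" using assms(7,8) by auto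
  then show ?thesis using s2 by metis
qed

definition other :: "nat \<Rightarrow> nat" where "other k = (if k = 1 then 2 else 1)"

lemma other: "2 \<le> d \<Longrightarrow> 1 \<le> k \<Longrightarrow> k \<le> d \<Longrightarrow> other k \<noteq> k \<and> 1 \<le> other k \<and> other k \<le> d"
  by (auto simp: other_def)

lemma U_same_ne:
  assumes "Claim d r n" "2 \<le> d" "1 \<le> k" "k \<le> d" "a < 0" "b < 0" "a \<noteq> b"
  shows "delta (G k k a b) \<in> UU d r n"
proof -
  define l where "l = other k"
  have l: "k \<noteq> l" "1 \<le> l" "l \<le> d" using other[OF assms(2-4)] by (auto simp: l_def)
  define K where "K = delta (G k k a b)"
  define Lm where "Lm = delta (G l l a b)"
  have z1: "sc (1/2) (\<Sum>h\<in>{a, -b}. brk r (G k l (0 - h) h) (G k l a b)) \<in> UU d r n"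
    by (rule Dstep[OF assms(1) valid_G negm_G U_mixed_all[OF assms(1) l(1) assms(3,4) l(2,3) assms(5,6)]])
      (use assms l brk_swap[OF l(1) assms(5,6)] in auto)
  have e1: "sc (1/2) (\<Sum>h\<in>{a, -b}. brk r (G k l (0 - h) h) (G k l a b)) = sc (1/2) (sc (- of_int a) Lm + sc (- of_int b) K)"
    using assms(5,6) by (simp add: brk_swap2[OF l(1) assms(5,6)] K_def Lm_def sc_def fun_eq_iff)
  have z2: "sc (1/2) (\<Sum>h\<in>{b, -a}. brk r (G k l (0 - h) h) (G k l b a)) \<in> UU d r n"
    by (rule Dstep[OF assms(1) valid_G negm_G U_mixed_all[OF assms(1) l(1) assms(3,4) l(2,3) assms(6,5)]])
      (use assms l brk_swap[OF l(1) assms(6,5)] in auto)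
  have e2: "sc (1/2) (\<Sum>h\<in>{b, -a}. brk r (G k l (0 - h) h) (G k l b a)) = sc (1/2) (sc (- of_int b) Lm + sc (- of_int a) K)"
    using assms(5,6) by (simp add: brk_swap2[OF l(1) assms(6,5)] K_def Lm_def sc_def fun_eq_iff G_sym[of l l b a] G_sym[of k k b a])
  have U1: "sc (1/2) (sc (- of_int a) Lm + sc (- of_int b) K) \<in> UU d r n" using z1 e1 by simp
  have U2: "sc (1/2) (sc (- of_int b) Lm + sc (- of_int a) K) \<in> UU d r n" using z2 e2 by simp
  have ne: "(of_int a :: complex)^2 - (of_int b)^2 \<noteq> 0"
  proof
    assume "(of_int a :: complex)^2 - (of_int b)^2 = 0"
    then have "of_int (a^2 - b^2) = (0::complex)" by simp
    then have "a^2 - b^2 = 0" by (simp only: of_int_eq_0_iff)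
    then have "(a - b) * (a + b) = 0" by (simp add: power2_eq_square algebra_simps)
    then show False using assms(5-7) by auto
  qed
  have "sc (2 / ((of_int a)^2 - (of_int b)^2)) (sc (of_int b) (sc (1/2) (sc (- of_int a) Lm + sc (- of_int b) K))
      + sc (- of_int a) (sc (1/2) (sc (- of_int b) Lm + sc (- of_int a) K))) \<in> UU d r n"
    by (intro fm.subspace_scale[OF UU_subspace] fm.subspace_add[OF UU_subspace] U1 U2)
  moreover have "sc (2 / ((of_int a)^2 - (of_int b)^2)) (sc (of_int b) (sc (1/2) (sc (- of_int a) Lm + sc (- of_int b) K))
      + sc (- of_int a) (sc (1/2) (sc (- of_int b) Lm + sc (- of_int a) K))) = K"
    using ne by (simp add: sc_def fun_eq_iff field_simps power2_eq_square)
  ultimately show ?thesis by (simp add: K_def)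
qed

lemma U_same_eq:
  assumes "Claim d r n" "2 \<le> d" "1 \<le> k" "k \<le> d" "a < 0"
  shows "delta (G k k a a) \<in> UU d r n"
proof -
  let ?S = "{2 * a<..<0}"
  have c: "cc k k (2 * a) \<in> UU d r n" by (rule c_in_U) (use assms in auto)
  have aS: "a \<in> ?S" using assms(5) by auto
  have fS: "finite ?S" by simp
  have sp: "(\<Sum>h\<in>?S. delta (G k k (2 * a - h) h)) = delta (G k k a a) + (\<Sum>h\<in>?S - {a}. delta (G k k (2 * a - h) h))"
    using sum.remove[OF fS aS, of "\<lambda>h. delta (G k k (2 * a - h) h)"] by (simp add: algebra_simps)
  have rest: "(\<Sum>h\<in>?S - {a}. delta (G k k (2 * a - h) h)) \<in> UU d r n"
    by (intro fm.subspace_sum[OF UU_subspace] U_same_ne[OF assms(1-4)]) auto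
  have "delta (G k k a a) = sc 2 (cc k k (2 * a)) - (\<Sum>h\<in>?S - {a}. delta (G k k (2 * a - h) h))"
    unfolding cc_def sp by (simp add: sc_def fun_eq_iff field_simps)
  also have "\<dots> \<in> UU d r n"
    by (rule fm.subspace_diff[OF UU_subspace fm.subspace_scale[OF UU_subspace c] rest])
  finally show ?thesis .
qed

lemma negm_in_UU:
  assumes "Claim d r n" "2 \<le> d" "valid_gen d y" "negm y"
  shows "delta y \<in> UU d r n"
proof (cases y)
  case (V i j a b)
  then have v: "1 \<le> i" "i \<le> d" "1 \<le> j" "j \<le> d" "i < j \<or> (i = j \<and> a \<le> b)" "a < 0" "b < 0"
    using assms(3,4) by auto
  show ?thesis
  proof (cases "i < j")
    case True
    then have "y = G i j a b" using V by (simp add: G_def)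
    then show ?thesis using U_mixed_all[OF assms(1) _ v(1-4,6,7)] True by simp
  next
    case False
    then have ij: "i = j" "a \<le> b" using v(5) by auto
    then have y: "y = G i i a b" using V by (simp add: G_def)
    show ?thesis
    proof (cases "a = b")
      case True then show ?thesis using y U_same_eq[OF assms(1,2) v(1,2,6)] by simp
    next
      case False then show ?thesis using y U_same_ne[OF assms(1,2) v(1,2,6,7)] by simp
    qed
  qed
next
  case One then show ?thesis using assms(4) by simp
qed

lemma Claim_all: "2 \<le> d \<Longrightarrow> Claim d r n"
proof (induction n)
  case 0
  have "BW d 0 = {[]}" by (auto simp: BW_def)
  then show ?case using wd_Nil_IV by (simp add: Claim_def)
next
  case (Suc n)
  show ?case unfolding Claim_def
  proof
    fix X assume X: "X \<in> BW d (Suc n)"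
    then obtain y X' where yX: "X = y # X'" "valid_gen d y" "negm y" "X' \<in> BW d n"
      by (cases X) (auto simp: BW_def)
    have "delta y \<in> UU d r n" by (rule negm_in_UU[OF Suc.IH[OF Suc.prems] Suc.prems yX(2,3)])
    then have "act (delta y) (wd X') \<in> IV d r" using yX(4) by (simp add: UU_def)
    then show "wd X \<in> IV d r" using yX(1) by (simp add: act_delta)
  qed
qed

lemma NK_IV: "2 \<le> d \<Longrightarrow> f \<in> NK d r \<Longrightarrow> f \<in> IV d r"
proof -
  assume d: "2 \<le> d" and f: "f \<in> NK d r"
  have "NB d \<union> Ker d r \<subseteq> IV d r"
  proof
    fix x assume "x \<in> NB d \<union> Ker d r"
    then show "x \<in> IV d r"
    proof
      assume "x \<in> NB d"
      then obtain X where "x = wd X" "valid_word d X" "list_all negm X" by (auto simp: NB_def)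
      then show ?thesis using Claim_all[OF d, of r "length X"] by (auto simp: Claim_def BW_def)
    qed (rule Ker_IV)
  qed
  from fm.span_minimal[OF this IV_subspace] f show ?thesis unfolding NK_def by auto
qed

theorem proposition3p1:
  fixes d :: nat and r :: complex
  assumes "2 \<le> d"
  shows "\<forall>w. valid_word d w \<longrightarrow> (\<exists>g \<in> cspan (Lvecs d r). (\<lambda>t. wd w t - g t) \<in> Ker d r)"
proof (intro allI impI)
  fix w assume "valid_word d w"
  then have "wd w \<in> IV d r" by (intro NK_IV[OF assms] NF)
  then obtain g where g: "g \<in> fm.span (Lvecs d r)" "wd w - g \<in> Ker d r" unfolding IV_def by blast
  have "(\<lambda>t. wd w t - g t) \<in> Ker d r" using g(2) unfolding fun_diff_def .
  then show "\<exists>g \<in> cspan (Lvecs d r). (\<lambda>t. wd w t - g t) \<in> Ker d r"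
    using g(1) unfolding cspan_eq by blast
qed

end
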